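(* There is an absolute constant $C$ such that for all $x\ge0$, $s>0$, $\sigma\in(1/2,1)$ and $\rho\ge1$, with $T=T(s,\sigma)$ and $F_\pm$ as in the context, \[\sup_{0<t\le T}|F_\pm(t)|\le C(s+1)\qquad\text{and}\qquad\|F_\pm\|_{v(\rho),(0,T]}\le C(s+1),\] where the variation is taken in the variable $t$.
   Context: Fix $x\ge0$, $s>0$, $\sigma\in(1/2,1)$. Let $Q_s(t)=x(e^t-1)-s\sqrt{e^{2t}-1}$ and $T=T(s,\sigma)=\sup\{t\in(0,1]:\ Q_s(t)<\sigma/(1+x)\}$. For $0<t\le1$ define \[F_\pm(t)=\frac{\bigl|x(e^t-1)\pm s\sqrt{e^{2t}-1}\bigr|\wedge\frac{\sigma}{1+x}}{\sqrt{1-e^{-2t}}},\] where $a\wedge b=\min(a,b)$. For $1\le\rho<\infty$ and an interval $I$, $\|\phi\|_{v(\rho),I}=\sup(\sum_{i=1}^n|\phi(t_i)-\phi(t_{i-1})|^\rho)^{1/\rho}$ over finite increasing sequences in $I$. *)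

theory Defs
  imports "HOL-Analysis.Analysis"
begin

definition Qs :: "real \<Rightarrow> real \<Rightarrow> real \<Rightarrow> real" where
  "Qs x s t = x * (exp t - 1) - s * sqrt (exp (2*t) - 1)"

definition Tsig :: "real \<Rightarrow> real \<Rightarrow> real \<Rightarrow> real" where
  "Tsig x s \<sigma> = Sup {t \<in> {0<..1}. Qs x s t < \<sigma> / (1 + x)}"

definition Fplus :: "real \<Rightarrow> real \<Rightarrow> real \<Rightarrow> real \<Rightarrow> real" where
  "Fplus x s \<sigma> t =
     min \<bar>x * (exp t - 1) + s * sqrt (exp (2*t) - 1)\<bar> (\<sigma> / (1 + x)) / sqrt (1 - exp (-2*t))"

definition Fminus :: "real \<Rightarrow> real \<Rightarrow> real \<Rightarrow> real \<Rightarrow> real" where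
  "Fminus x s \<sigma> t =
     min \<bar>x * (exp t - 1) - s * sqrt (exp (2*t) - 1)\<bar> (\<sigma> / (1 + x)) / sqrt (1 - exp (-2*t))"

definition pvar :: "real \<Rightarrow> real set \<Rightarrow> (real \<Rightarrow> real) \<Rightarrow> ereal" where
  "pvar \<rho> I \<phi> = (SUP p \<in> {(n, t). (\<forall>i\<le>n. t i \<in> I) \<and> (\<forall>i<n. t i < t (Suc i))}.
       ereal ((\<Sum>i\<in>{1..fst p}. \<bar>\<phi> (snd p i) - \<phi> (snd p (i - 1))\<bar> powr \<rho>) powr (1 / \<rho>)))"

end

theory Submission imports Defs begin

definition gg :: "real \<Rightarrow> real" where "gg t = sqrt (1 - exp (-2*t))"
definition PP :: "real \<Rightarrow> real \<Rightarrow> real" where "PP x t = x * (exp t - 1) / gg t"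
definition DD :: "real \<Rightarrow> real \<Rightarrow> real \<Rightarrow> real" where "DD x \<sigma> t = \<sigma> / (1 + x) / gg t"

lemma exp_m2: "exp (-2*t) = inverse ((exp (t::real))^2)"
proof -
  have "exp (-2*t) = inverse (exp (2*t))" by (simp add: exp_minus[symmetric])
  also have "exp (2*t) = (exp t)^2" by (rule exp_double)
  finally show ?thesis .
qed

lemma gg_pos: "t > 0 \<Longrightarrow> gg t > 0"
  unfolding gg_def by simp

lemma gg_mono: "0 < t1 \<Longrightarrow> t1 \<le> t2 \<Longrightarrow> gg t1 \<le> gg t2"
  unfolding gg_def by simp

lemma gg_sq: "t > 0 \<Longrightarrow> (gg t)^2 = 1 - inverse ((exp t)^2)"
proof -
  assume "t > 0"
  then have "exp (-2*t) \<le> 1" by simp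
  then have "(gg t)^2 = 1 - exp (-2*t)" unfolding gg_def by simp
  then show ?thesis using exp_m2[of t] by simp
qed

lemma sqrt_ratio: "t > 0 \<Longrightarrow> sqrt (exp (2*t) - 1) / gg t = exp t"
proof -
  assume t: "t > 0"
  have ne: "(exp t)^2 \<noteq> 0" by simp
  have "exp (2*t) - 1 = (exp t)^2 * (1 - exp (-2*t))"
    unfolding exp_m2 exp_double using ne by (simp add: right_diff_distrib)
  then have "sqrt (exp (2*t) - 1) = exp t * gg t"
    unfolding gg_def by (simp add: real_sqrt_mult)
  then show ?thesis using gg_pos[OF t] by simp
qed

lemma ratio_formula:
  fixes y :: real assumes "y > 1"
  shows "(y - 1) / sqrt (1 - inverse (y^2)) = y * sqrt ((y-1)/(y+1))"
proof -
  have y0: "y \<noteq> 0" "y + 1 \<noteq> 0" using assms by auto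
  have e1: "1 - inverse (y^2) = (y*y-1)/(y*y)"
    using y0 by (simp add: field_simps power2_eq_square)
  have e2: "(y-1)/(y+1) * ((y+1)/y)^2 = (y*y-1)/(y*y)"
  proof -
    have "(y-1)/(y+1) * ((y+1)/y)^2 = (y-1)/(y+1) * ((y+1)*(y+1)) / (y*y)"
      by (simp add: power2_eq_square)
    also have "(y-1)/(y+1) * ((y+1)*(y+1)) = (y-1)*(y+1)" using y0 by simp
    also have "(y-1)*(y+1) = y*y-1" by (simp add: algebra_simps)
    finally show ?thesis .
  qed
  have A: "1 - inverse (y^2) = (y-1)/(y+1) * ((y+1)/y)^2" using e1 e2 by simp
  have C: "sqrt (((y+1)/y)^2) = (y+1)/y" using assms by simp
  have "sqrt (1 - inverse (y^2)) = sqrt ((y-1)/(y+1) * ((y+1)/y)^2)" by (simp only: A)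
  also have "\<dots> = sqrt ((y-1)/(y+1)) * sqrt (((y+1)/y)^2)"
    by (rule real_sqrt_mult)
  also have "\<dots> = sqrt ((y-1)/(y+1)) * ((y+1)/y)" by (simp only: C)
  finally have e: "sqrt (1 - inverse (y^2)) = sqrt ((y-1)/(y+1)) * ((y+1)/y)" .
  define q where "q = sqrt ((y-1)/(y+1))"
  have q: "q > 0" unfolding q_def using assms by simp
  have r: "q * q = (y-1)/(y+1)" unfolding q_def using assms by simp
  have r2: "y - 1 = q * q * (y+1)" using r y0 by simp
  have d: "q * ((y+1)/y) \<noteq> 0" using q y0 by simp
  have "y * q * (q * ((y+1)/y)) = q * q * (y+1)" using y0 by (simp add: field_simps)
  then have eq: "y - 1 = y * q * (q * ((y+1)/y))" using r2 by simp
  have "(y-1) / (q * ((y+1)/y)) = y * q" by (rule nonzero_divide_eq_eq[OF d, THEN iffD2, OF eq])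
  then show ?thesis unfolding e q_def .
qed

lemma PP_formula: "t > 0 \<Longrightarrow> PP x t = x * (exp t * sqrt ((exp t - 1)/(exp t + 1)))"
proof -
  assume t: "t > 0"
  have "gg t = sqrt (1 - inverse ((exp t)^2))" unfolding gg_def exp_m2 ..
  then have "(exp t - 1) / gg t = exp t * sqrt ((exp t - 1)/(exp t + 1))"
    using ratio_formula[of "exp t"] t by simp
  then show ?thesis unfolding PP_def by (metis times_divide_eq_right)
qed

lemma PP_mono: "x \<ge> 0 \<Longrightarrow> 0 < t1 \<Longrightarrow> t1 \<le> t2 \<Longrightarrow> PP x t1 \<le> PP x t2"
proof -
  assume x: "x \<ge> 0" and t1: "0 < t1" and t12: "t1 \<le> t2"
  define y1 where "y1 = exp t1"
  define y2 where "y2 = exp t2"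
  have y1: "y1 > 1" unfolding y1_def using t1 by simp
  have y12: "y1 \<le> y2" unfolding y1_def y2_def using t12 by simp
  have "(y1 - 1) * (y2 + 1) \<le> (y2 - 1) * (y1 + 1)"
    using y12 by (simp add: algebra_simps)
  then have "(y1 - 1)/(y1+1) \<le> (y2-1)/(y2+1)"
    using y1 y12 by (simp add: divide_simps)
  then have "sqrt ((y1 - 1)/(y1+1)) \<le> sqrt ((y2-1)/(y2+1))" by simp
  then have "y1 * sqrt ((y1 - 1)/(y1+1)) \<le> y2 * sqrt ((y2-1)/(y2+1))"
    using y1 y12 by (intro mult_mono) auto
  then show ?thesis using PP_formula[of t1 x] PP_formula[of t2 x] t1 t12 x
    unfolding y1_def y2_def by (simp add: mult_left_mono)
qed

lemma DD_mono: "x \<ge> 0 \<Longrightarrow> \<sigma> \<ge> 0 \<Longrightarrow> 0 < t1 \<Longrightarrow> t1 \<le> t2 \<Longrightarrow> DD x \<sigma> t2 \<le> DD x \<sigma> t1"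
  unfolding DD_def using gg_pos[of t1] gg_pos[of t2] gg_mono[of t1 t2]
  by (intro divide_left_mono) auto

lemma PP_nonneg: "x \<ge> 0 \<Longrightarrow> t > 0 \<Longrightarrow> PP x t \<ge> 0"
  unfolding PP_def using gg_pos[of t] by (intro divide_nonneg_pos) auto

lemma DD_nonneg: "x \<ge> 0 \<Longrightarrow> \<sigma> \<ge> 0 \<Longrightarrow> t > 0 \<Longrightarrow> DD x \<sigma> t \<ge> 0"
  unfolding DD_def using gg_pos[of t] by (intro divide_nonneg_pos) auto

lemma min_sq: "(a::real) \<ge> 0 \<Longrightarrow> b \<ge> 0 \<Longrightarrow> (min a b)^2 \<le> a * b"
proof (cases "a \<le> b")
  case True
  assume "a \<ge> 0"
  then have "a * a \<le> a * b" using True by (intro mult_left_mono) auto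
  then show ?thesis using True by (simp add: power2_eq_square)
next
  case False
  assume "b \<ge> 0"
  then have "b * b \<le> a * b" using False by (intro mult_right_mono) auto
  then show ?thesis using False by (simp add: power2_eq_square)
qed

lemma PD_le: assumes x: "x \<ge> 0" and sg: "0 \<le> \<sigma>" "\<sigma> < 1" and t: "0 < t" "t \<le> 1"
  shows "PP x t * DD x \<sigma> t \<le> 4"
proof -
  define y where "y = exp t"
  have y: "y > 1" "y \<le> 3" unfolding y_def using t 
    by (auto intro: order.trans[OF _ exp_le])
  have g2: "(gg t)^2 = 1 - inverse (y^2)" using gg_sq t y_def by simp
  have "PP x t * DD x \<sigma> t = x * \<sigma> / (1+x) * ((y - 1) / (gg t)^2)"
    unfolding PP_def DD_def y_def by (simp add: power2_eq_square field_simps)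
  also have "(y - 1) / (gg t)^2 = y^2/(y+1)"
  proof -
    have "1 - inverse (y^2) = (y-1)*(y+1)/y^2" using y by (simp add: field_simps power2_eq_square)
    then show ?thesis unfolding g2 using y by (simp add: power2_eq_square)
  qed
  finally have e: "PP x t * DD x \<sigma> t = x * \<sigma> / (1+x) * (y^2/(y+1))" .
  have "y*y \<le> 3*y" using y by (intro mult_right_mono) auto
  then have "y*y \<le> 4*y+4" using y by linarith
  then have "y^2 \<le> 4*(y+1)" by (simp add: power2_eq_square algebra_simps)
  then have a: "y^2/(y+1) \<le> 4" using y by (simp add: pos_divide_le_eq)
  have "x*\<sigma> \<le> x*1" using x sg by (intro mult_left_mono) auto
  then have "x*\<sigma> \<le> 1 + x" by linarith
  then have b: "x * \<sigma> / (1+x) \<le> 1" using divide_le_eq_1_pos[of "1+x" "x*\<sigma>"] x by linarith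
  have c: "x * \<sigma> / (1+x) \<ge> 0" using x sg by simp
  have "x * \<sigma> / (1+x) * (y^2/(y+1)) \<le> 1 * 4"
    using a b c y by (intro mult_mono) auto
  then show ?thesis using e by simp
qed


lemma Fplus_form:
  assumes x: "x \<ge> 0" and s: "s \<ge> 0" and t: "t > 0"
  shows "Fplus x s \<sigma> t = min (PP x t + s * exp t) (DD x \<sigma> t)"
proof -
  have g: "gg t > 0" using gg_pos t by simp
  have a: "x * (exp t - 1) \<ge> 0" using x t by simp
  have b: "s * sqrt (exp (2*t) - 1) \<ge> 0" using s t by simp
  have "Fplus x s \<sigma> t = min (x * (exp t - 1) + s * sqrt (exp (2*t) - 1)) (\<sigma> / (1 + x)) / gg t"
    unfolding Fplus_def gg_def using a b by simp
  also have "\<dots> = min ((x * (exp t - 1) + s * sqrt (exp (2*t) - 1)) / gg t) (\<sigma> / (1 + x) / gg t)"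
    using g by (simp add: min_divide_distrib_right)
  also have "(x * (exp t - 1) + s * sqrt (exp (2*t) - 1)) / gg t
      = PP x t + s * (sqrt (exp (2*t) - 1) / gg t)"
    unfolding PP_def by (simp add: add_divide_distrib)
  also have "sqrt (exp (2*t) - 1) / gg t = exp t" using sqrt_ratio t by simp
  finally show ?thesis unfolding DD_def .
qed

lemma Fminus_form:
  assumes x: "x \<ge> 0" and s: "s \<ge> 0" and t: "t > 0"
  shows "Fminus x s \<sigma> t = min \<bar>PP x t - s * exp t\<bar> (DD x \<sigma> t)"
proof -
  have g: "gg t > 0" using gg_pos t by simp
  have "Fminus x s \<sigma> t = min \<bar>x * (exp t - 1) - s * sqrt (exp (2*t) - 1)\<bar> (\<sigma> / (1 + x)) / gg t"
    unfolding Fminus_def gg_def by simp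
  also have "\<dots> = min (\<bar>x * (exp t - 1) - s * sqrt (exp (2*t) - 1)\<bar> / gg t) (\<sigma> / (1 + x) / gg t)"
    using g by (simp add: min_divide_distrib_right)
  also have "\<bar>x * (exp t - 1) - s * sqrt (exp (2*t) - 1)\<bar> / gg t
      = \<bar>(x * (exp t - 1) - s * sqrt (exp (2*t) - 1)) / gg t\<bar>"
    using g by simp
  also have "(x * (exp t - 1) - s * sqrt (exp (2*t) - 1)) / gg t
      = PP x t - s * (sqrt (exp (2*t) - 1) / gg t)"
    unfolding PP_def by (simp add: diff_divide_distrib)
  also have "sqrt (exp (2*t) - 1) / gg t = exp t" using sqrt_ratio t by simp
  finally show ?thesis unfolding DD_def .
qed

lemma tele: "(\<Sum>i\<in>{1..n::nat}. c i - c (i-1)) = c n - (c 0 :: real)"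
  by (induction n) (simp_all add: sum.nat_ivl_Suc')

lemma min_abs_diff:
  "\<bar>min \<bar>a - b\<bar> c - min \<bar>a' - b'\<bar> (c'::real)\<bar> \<le> \<bar>a - a'\<bar> + \<bar>b - b'\<bar> + \<bar>c - c'\<bar>"
  by (simp add: min_def abs_if)

lemma var3:
  fixes f v q w :: "nat \<Rightarrow> real"
  assumes f: "\<And>i. i \<le> n \<Longrightarrow> f i = min \<bar>v i - q i\<bar> (w i)"
    and mv: "\<And>i. 1 \<le> i \<Longrightarrow> i \<le> n \<Longrightarrow> v (i-1) \<le> v i"
    and mq: "\<And>i. 1 \<le> i \<Longrightarrow> i \<le> n \<Longrightarrow> q (i-1) \<le> q i"
    and mw: "\<And>i. 1 \<le> i \<Longrightarrow> i \<le> n \<Longrightarrow> w i \<le> w (i-1)"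
    and bv: "\<And>i. i \<le> n \<Longrightarrow> 0 \<le> v i \<and> v i \<le> B"
    and bq: "\<And>i. i \<le> n \<Longrightarrow> 0 \<le> q i \<and> q i \<le> B"
    and bw: "\<And>i. i \<le> n \<Longrightarrow> 0 \<le> w i \<and> w i \<le> B"
  shows "(\<Sum>i\<in>{1..n}. \<bar>f i - f (i-1)\<bar>) \<le> 3*B"
proof -
  have "(\<Sum>i\<in>{1..n}. \<bar>f i - f (i-1)\<bar>)
      \<le> (\<Sum>i\<in>{1..n}. ((v i - v (i-1)) + (q i - q (i-1))) + (- (w i - w (i-1))))"
  proof (rule sum_mono)
    fix i assume "i \<in> {1..n}"
    then have i: "1 \<le> i" "i \<le> n" by auto
    then have i1: "i - 1 \<le> n" by simp
    have "\<bar>f i - f (i-1)\<bar> \<le> \<bar>v i - v (i-1)\<bar> + \<bar>q i - q (i-1)\<bar> + \<bar>w i - w (i-1)\<bar>"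
      unfolding f[OF i(2)] f[OF i1] by (rule min_abs_diff)
    then show "\<bar>f i - f (i-1)\<bar> \<le> ((v i - v (i-1)) + (q i - q (i-1))) + (- (w i - w (i-1)))"
      using mv[OF i] mq[OF i] mw[OF i] by linarith
  qed
  also have "\<dots> = (v n - v 0) + (q n - q 0) + (- (w n - w 0))"
    by (simp only: sum.distrib tele sum_negf)
  also have "\<dots> \<le> 3*B" using bv[of n] bv[of 0] bq[of n] bq[of 0] bw[of n] bw[of 0] by simp
  finally show ?thesis .
qed

lemma powr_sum_le:
  fixes d :: "nat \<Rightarrow> real"
  assumes r: "\<rho> \<ge> 1" and A: "finite A" and d: "\<And>i. i \<in> A \<Longrightarrow> d i \<ge> 0"
  shows "(\<Sum>i\<in>A. d i powr \<rho>) powr (1/\<rho>) \<le> (\<Sum>i\<in>A. d i)"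
proof -
  define S where "S = (\<Sum>i\<in>A. d i)"
  have S0: "S \<ge> 0" unfolding S_def using d by (simp add: sum_nonneg)
  have each: "d i powr \<rho> \<le> d i * S powr (\<rho> - 1)" if i: "i \<in> A" for i
  proof (cases "d i = 0")
    case True then show ?thesis by simp
  next
    case False
    then have di: "d i > 0" using d[OF i] by simp
    have "d i powr \<rho> = d i powr (1 + (\<rho> - 1))" by simp
    also have "\<dots> = d i powr 1 * d i powr (\<rho> - 1)" by (rule powr_add)
    also have "\<dots> = d i * d i powr (\<rho> - 1)" using di by simp
    also have "\<dots> \<le> d i * S powr (\<rho> - 1)"
    proof (rule mult_left_mono)
      have "d i \<le> S" unfolding S_def using A d i by (intro member_le_sum) auto
      then show "d i powr (\<rho> - 1) \<le> S powr (\<rho> - 1)" using r di by (intro powr_mono2) auto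
    qed (use di in simp)
    finally show ?thesis .
  qed
  have "(\<Sum>i\<in>A. d i powr \<rho>) \<le> (\<Sum>i\<in>A. d i * S powr (\<rho> - 1))"
    using each by (rule sum_mono)
  also have "\<dots> = S * S powr (\<rho> - 1)" unfolding S_def by (simp add: sum_distrib_right)
  also have "\<dots> = S powr \<rho>"
  proof (cases "S = 0")
    case True then show ?thesis by simp
  next
    case False
    then have Sp: "S > 0" using S0 by simp
    have "S powr \<rho> = S powr (1 + (\<rho> - 1))" by simp
    also have "\<dots> = S powr 1 * S powr (\<rho> - 1)" by (rule powr_add)
    also have "\<dots> = S * S powr (\<rho> - 1)" using Sp by simp
    finally show ?thesis by simp
  qed
  finally have le: "(\<Sum>i\<in>A. d i powr \<rho>) \<le> S powr \<rho>" .
  have "(\<Sum>i\<in>A. d i powr \<rho>) powr (1/\<rho>) \<le> (S powr \<rho>) powr (1/\<rho>)"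
    using le r by (intro powr_mono2) (auto intro: sum_nonneg)
  also have "\<dots> = S" using r S0 by (simp add: powr_powr)
  finally show ?thesis unfolding S_def .
qed

lemma Tsig_le1:
  assumes x: "x \<ge> 0" and s: "s > 0" and sg: "0 < \<sigma>" "\<sigma> < 1"
  shows "Tsig x s \<sigma> \<le> 1"
proof -
  define c where "c = \<sigma> / (2*(1+x)^2)"
  have c0: "c > 0" unfolding c_def using x sg by simp
  have "(1+x)^2 \<ge> 1" using x by simp
  then have "2*(1+x)^2 \<ge> 2" by simp
  then have c1: "c \<le> 1" unfolding c_def using sg by (simp add: divide_le_eq)
  define t0 where "t0 = ln (1 + c)"
  have t0: "t0 > 0" unfolding t0_def using c0 by simp
  have "t0 \<le> c" unfolding t0_def using c0 by (intro ln_add_one_self_le_self) simp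
  then have t01: "t0 \<le> 1" using c1 by simp
  have e: "exp t0 = 1 + c" unfolding t0_def using c0 by simp
  have "Qs x s t0 \<le> x * c" unfolding Qs_def e using s t0 by simp
  also have "x * c < \<sigma> / (1 + x)"
  proof -
    have "x * c = \<sigma> / (1+x) * (x / (2*(1+x)))" unfolding c_def using x
      by (simp add: power2_eq_square field_simps)
    also have "x / (2*(1+x)) < 1" using x by (simp add: divide_less_eq)
    then have "\<sigma> / (1+x) * (x / (2*(1+x))) < \<sigma> / (1+x) * 1"
      using sg x by (intro mult_strict_left_mono) auto
    finally show ?thesis by simp
  qed
  finally have "t0 \<in> {t \<in> {0<..1}. Qs x s t < \<sigma> / (1 + x)}" using t0 t01 by simp
  then have ne: "{t \<in> {0<..1}. Qs x s t < \<sigma> / (1 + x)} \<noteq> {}" by blast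
  show ?thesis unfolding Tsig_def by (rule cSup_least[OF ne]) auto
qed


lemma ar1: "0\<le>pa \<Longrightarrow> 0\<le>qa \<Longrightarrow> 0\<le>da \<Longrightarrow> min pa da \<le> 2 \<Longrightarrow> qa \<le> 3 * sa \<Longrightarrow>
  min (pa+qa) da \<le> 3*(sa+1) \<and> min \<bar>pa - qa\<bar> da \<le> 3*(sa+1::real)"
  unfolding min_def abs_if by (auto split: if_splits)
lemma ar2: "0\<le>pa \<Longrightarrow> 0\<le>qa \<Longrightarrow> 0\<le>da \<Longrightarrow> qa \<le> M \<Longrightarrow> min (pa+qa) da \<le> M \<Longrightarrow> min \<bar>pa-qa\<bar> da \<le> (M::real) \<Longrightarrow>
  min (pa+qa) da = min \<bar>min (pa+qa) M - 0\<bar> (min da M) \<and> min \<bar>pa-qa\<bar> da = min \<bar>min pa (qa+M) - qa\<bar> (min da M)"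
  unfolding min_def abs_if by (auto split: if_splits)

lemma pvar_bound:
  fixes F V Qq W :: "real \<Rightarrow> real"
  assumes r: "\<rho> \<ge> 1"
    and f: "\<And>t. t \<in> I \<Longrightarrow> F t = min \<bar>V t - Qq t\<bar> (W t)"
    and mono: "\<And>t1 t2. t1 \<in> I \<Longrightarrow> t2 \<in> I \<Longrightarrow> t1 \<le> t2 \<Longrightarrow> V t1 \<le> V t2 \<and> Qq t1 \<le> Qq t2 \<and> W t2 \<le> W t1"
    and b: "\<And>t. t \<in> I \<Longrightarrow> 0 \<le> V t \<and> V t \<le> B \<and> 0 \<le> Qq t \<and> Qq t \<le> B \<and> 0 \<le> W t \<and> W t \<le> B"
  shows "pvar \<rho> I F \<le> ereal (3*B)"
  unfolding pvar_def
proof (rule SUP_least)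
  fix p assume "p \<in> {(n, t). (\<forall>i\<le>n. t i \<in> I) \<and> (\<forall>i<n. t i < t (Suc i))}"
  then obtain n tt where p: "p = (n, tt)" and ti: "\<And>i. i \<le> n \<Longrightarrow> tt i \<in> I"
    and inc: "\<And>i. i < n \<Longrightarrow> tt i < tt (Suc i)" by auto
  have step: "tt (i-1) \<le> tt i" if "1 \<le> i" "i \<le> n" for i
  proof -
    have "tt (i-1) < tt (Suc (i-1))" using inc[of "i-1"] that by simp
    then show ?thesis using that by simp
  qed
  have "(\<Sum>i\<in>{1..n}. \<bar>F (tt i) - F (tt (i-1))\<bar> powr \<rho>) powr (1/\<rho>)
      \<le> (\<Sum>i\<in>{1..n}. \<bar>F (tt i) - F (tt (i-1))\<bar>)"
    using r by (intro powr_sum_le) auto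
  also have "\<dots> \<le> 3*B"
  proof (rule var3[where v="\<lambda>i. V (tt i)" and q="\<lambda>i. Qq (tt i)" and w="\<lambda>i. W (tt i)"])
    fix i assume "i \<le> n"
    then show "F (tt i) = min \<bar>V (tt i) - Qq (tt i)\<bar> (W (tt i))"
      "0 \<le> V (tt i) \<and> V (tt i) \<le> B" "0 \<le> Qq (tt i) \<and> Qq (tt i) \<le> B"
      "0 \<le> W (tt i) \<and> W (tt i) \<le> B"
      using f ti b by auto
  next
    fix i assume i: "1 \<le> i" "i \<le> n"
    then have m: "V (tt (i-1)) \<le> V (tt i) \<and> Qq (tt (i-1)) \<le> Qq (tt i) \<and> W (tt i) \<le> W (tt (i-1))"
      using mono[OF ti ti step[OF i]] by simp
    then show "V (tt (i-1)) \<le> V (tt i)" "Qq (tt (i-1)) \<le> Qq (tt i)" "W (tt i) \<le> W (tt (i-1))"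
      by auto
  qed
  finally show "ereal ((\<Sum>i\<in>{1..fst p}. \<bar>F (snd p i) - F (snd p (i - 1))\<bar> powr \<rho>) powr (1 / \<rho>)) \<le> ereal (3*B)"
    unfolding p by simp
qed

theorem lemma5p4:
  "\<exists>C::real. \<forall>x s \<sigma> \<rho>. x \<ge> 0 \<and> s > 0 \<and> 1/2 < \<sigma> \<and> \<sigma> < 1 \<and> \<rho> \<ge> 1 \<longrightarrow>
     (\<forall>t \<in> {0<..Tsig x s \<sigma>}. \<bar>Fplus x s \<sigma> t\<bar> \<le> C * (s + 1) \<and> \<bar>Fminus x s \<sigma> t\<bar> \<le> C * (s + 1)) \<and>
     pvar \<rho> {0<..Tsig x s \<sigma>} (Fplus x s \<sigma>) \<le> ereal (C * (s + 1)) \<and>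
     pvar \<rho> {0<..Tsig x s \<sigma>} (Fminus x s \<sigma>) \<le> ereal (C * (s + 1))"
proof (intro exI[of _ 20] allI impI)
  fix x s \<sigma> \<rho> :: real
  assume H: "x \<ge> 0 \<and> s > 0 \<and> 1/2 < \<sigma> \<and> \<sigma> < 1 \<and> \<rho> \<ge> 1"
  then have x: "x \<ge> 0" and s: "s > 0" and sg: "0 < \<sigma>" "\<sigma> < 1" and r: "\<rho> \<ge> 1" by auto
  define M where "M = 3*(s+1)"
  define T where "T = Tsig x s \<sigma>"
  have T1: "T \<le> 1" using Tsig_le1 x s sg unfolding T_def by blast
  define P where "P = PP x"
  define Q where "Q = (\<lambda>t. s * exp t)"
  define D where "D = DD x \<sigma>"
  have pt: "0 \<le> P t \<and> 0 \<le> Q t \<and> Q t \<le> M \<and> 0 \<le> D t \<and>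
     0 \<le> Fplus x s \<sigma> t \<and> Fplus x s \<sigma> t \<le> M \<and> 0 \<le> Fminus x s \<sigma> t \<and> Fminus x s \<sigma> t \<le> M \<and>
     Fplus x s \<sigma> t = min \<bar>min (P t + Q t) M - 0\<bar> (min (D t) M) \<and>
     Fminus x s \<sigma> t = min \<bar>min (P t) (Q t + M) - Q t\<bar> (min (D t) M)"
    if tI: "t \<in> {0<..T}" for t
  proof -
    have t: "0 < t" "t \<le> 1" using tI T1 by auto
    have P0: "0 \<le> P t" unfolding P_def using PP_nonneg x t by simp
    have D0: "0 \<le> D t" unfolding D_def using DD_nonneg x sg t by simp
    have "exp t \<le> exp 1" using t by simp
    then have e3: "exp t \<le> 3" using exp_le by linarith
    have Q0: "0 \<le> Q t" unfolding Q_def using s by simp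
    have "s * exp t \<le> s * 3" using e3 s by (intro mult_left_mono) auto
    then have Q3: "Q t \<le> 3 * s" unfolding Q_def by simp
    have "(min (P t) (D t))^2 \<le> P t * D t" using P0 D0 by (rule min_sq)
    also have "\<dots> \<le> 4" unfolding P_def D_def using PD_le x sg t by simp
    also have "(4::real) = 2^2" by simp
    finally have mPD: "min (P t) (D t) \<le> 2" by (rule power2_le_imp_le) simp
    have fp: "Fplus x s \<sigma> t = min (P t + Q t) (D t)"
      unfolding P_def Q_def D_def using Fplus_form x s t by simp
    have fm: "Fminus x s \<sigma> t = min \<bar>P t - Q t\<bar> (D t)"
      unfolding P_def Q_def D_def using Fminus_form x s t by simp
    have "Q t \<le> M" using Q3 unfolding M_def by simp
    moreover have b1: "min (P t + Q t) (D t) \<le> M \<and> min \<bar>P t - Q t\<bar> (D t) \<le> M"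
      unfolding M_def using ar1[OF P0 Q0 D0 mPD Q3] .
    moreover note ar2[OF P0 Q0 D0 \<open>Q t \<le> M\<close>] 
    ultimately show ?thesis using fp fm P0 Q0 D0 by simp
  qed
  have mono: "P t1 \<le> P t2 \<and> Q t1 \<le> Q t2 \<and> D t2 \<le> D t1"
    if "t1 \<in> {0<..T}" "t2 \<in> {0<..T}" "t1 \<le> t2" for t1 t2
    using that PP_mono[of x t1 t2] DD_mono[of x \<sigma> t1 t2] x sg s
    unfolding P_def Q_def D_def by (auto intro: mult_left_mono)
  have v1: "pvar \<rho> {0<..T} (Fplus x s \<sigma>) \<le> ereal (3*M)"
  proof (rule pvar_bound[OF r, where V="\<lambda>t. min (P t + Q t) M" and Qq="\<lambda>t. 0" and W="\<lambda>t. min (D t) M"])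
    fix t assume "t \<in> {0<..T}"
    from pt[OF this] show "Fplus x s \<sigma> t = min \<bar>min (P t + Q t) M - 0\<bar> (min (D t) M)" by simp
    from pt[OF \<open>t \<in> {0<..T}\<close>] show "0 \<le> min (P t + Q t) M \<and> min (P t + Q t) M \<le> M \<and> 0 \<le> (0::real) \<and> (0::real) \<le> M \<and> 0 \<le> min (D t) M \<and> min (D t) M \<le> M"
      unfolding M_def using s by simp
  next
    fix t1 t2 assume "t1 \<in> {0<..T}" "t2 \<in> {0<..T}" "t1 \<le> t2"
    from mono[OF this] show "min (P t1 + Q t1) M \<le> min (P t2 + Q t2) M \<and> (0::real) \<le> 0 \<and> min (D t2) M \<le> min (D t1) M"
      by (auto simp: min_def)
  qed
  have v2: "pvar \<rho> {0<..T} (Fminus x s \<sigma>) \<le> ereal (3*(2*M))"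
  proof (rule pvar_bound[OF r, where V="\<lambda>t. min (P t) (Q t + M)" and Qq="Q" and W="\<lambda>t. min (D t) M"])
    fix t assume "t \<in> {0<..T}"
    from pt[OF this] show "Fminus x s \<sigma> t = min \<bar>min (P t) (Q t + M) - Q t\<bar> (min (D t) M)" by simp
    from pt[OF \<open>t \<in> {0<..T}\<close>] show "0 \<le> min (P t) (Q t + M) \<and> min (P t) (Q t + M) \<le> 2*M \<and> 0 \<le> Q t \<and> Q t \<le> 2*M \<and> 0 \<le> min (D t) M \<and> min (D t) M \<le> 2*M"
      unfolding M_def using s by (simp add: min_def)
  next
    fix t1 t2 assume "t1 \<in> {0<..T}" "t2 \<in> {0<..T}" "t1 \<le> t2"
    from mono[OF this] show "min (P t1) (Q t1 + M) \<le> min (P t2) (Q t2 + M) \<and> Q t1 \<le> Q t2 \<and> min (D t2) M \<le> min (D t1) M"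
      by (auto simp: min_def)
  qed
  have M20: "3*M \<le> 20*(s+1)" "3*(2*M) \<le> 20*(s+1)" unfolding M_def using s by auto
  have "\<forall>t\<in>{0<..T}. \<bar>Fplus x s \<sigma> t\<bar> \<le> 20 * (s + 1) \<and> \<bar>Fminus x s \<sigma> t\<bar> \<le> 20 * (s + 1)"
  proof
    fix t assume "t \<in> {0<..T}"
    from pt[OF this] show "\<bar>Fplus x s \<sigma> t\<bar> \<le> 20 * (s + 1) \<and> \<bar>Fminus x s \<sigma> t\<bar> \<le> 20 * (s + 1)"
      unfolding M_def using s by auto
  qed
  moreover have "pvar \<rho> {0<..T} (Fplus x s \<sigma>) \<le> ereal (20 * (s + 1))"
    using v1 M20 by (meson ereal_less_eq(3) order.trans)
  moreover have "pvar \<rho> {0<..T} (Fminus x s \<sigma>) \<le> ereal (20 * (s + 1))"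
    using v2 M20 by (meson ereal_less_eq(3) order.trans)
  ultimately show "(\<forall>t\<in>{0<..Tsig x s \<sigma>}. \<bar>Fplus x s \<sigma> t\<bar> \<le> 20 * (s + 1) \<and> \<bar>Fminus x s \<sigma> t\<bar> \<le> 20 * (s + 1)) \<and>
     pvar \<rho> {0<..Tsig x s \<sigma>} (Fplus x s \<sigma>) \<le> ereal (20 * (s + 1)) \<and>
     pvar \<rho> {0<..Tsig x s \<sigma>} (Fminus x s \<sigma>) \<le> ereal (20 * (s + 1))"
    unfolding T_def by blast
qed

end
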